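(* Let $\kappa>0$. On $\mathbb{C}^4$ with coordinates $(Z_1,Z_2,W_1,W_2)$ let $\mu_R=|Z_1|^2+|Z_2|^2-|W_1|^2-|W_2|^2-2\sqrt\kappa$ and $\mu_C=Z_1W_1+Z_2W_2$. For $(z_1,z_2)\in\mathbb{C}^2\setminus\{0\}$ and $\psi\in\mathbb{R}$ put $s=|z_1|^2+|z_2|^2$, $F=\sqrt{1+\kappa/s^2}$, $f=\sqrt{1+\kappa/s^2}+\sqrt\kappa/s$, and define the map $$Z_1=z_1e^{i\psi}f^{1/2},\quad Z_2=z_2e^{i\psi}f^{1/2},\quad W_1=-z_2e^{-i\psi}f^{-1/2},\quad W_2=z_1e^{-i\psi}f^{-1/2}.$$ Then its image lies in $\mu_R^{-1}(0)\cap\mu_C^{-1}(0)$, and the pullback of $\frac12\big(|dZ_1|^2+|dZ_2|^2+|dW_1|^2+|dW_2|^2\big)$ equals $$g+sF\big(d\psi+i(A-\bar A)\big)^2,$$ where $g=\frac1s\big(F|z_1dz_2-z_2dz_1|^2+F^{-1}|\bar z_1dz_1+\bar z_2dz_2|^2\big)$ is the Eguchi–Hanson metric and $A=\frac{\sqrt\kappa}{2s^2F}(z_1d\bar z_1+z_2d\bar z_2)$.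
   Context: For a complex $1$-form $\alpha$, $|\alpha|^2$ denotes the symmetric product $\alpha\bar\alpha$; $(\cdot)^2$ of a real $1$-form is its symmetric square. Note $A-\bar A$ is purely imaginary so $i(A-\bar A)$ is a real $1$-form. *)

theory Defs
  imports "HOL-Analysis.Analysis"
begin

text \<open>Tangent vectors of the parameter space (C^2 minus 0) x R at a point are
  elements of (complex x complex) x real; tangent vectors of C^4 are elements of
  complex x complex x complex x complex.  Complex 1-forms are real-linear maps
  from tangent vectors to complex; symmetric 2-tensors are (complex-valued)
  symmetric bilinear forms on tangent vectors.\<close>

definition sym_prod :: "('v \<Rightarrow> complex) \<Rightarrow> ('v \<Rightarrow> complex) \<Rightarrow> 'v \<Rightarrow> 'v \<Rightarrow> complex" where
  "sym_prod \<alpha> \<beta> v w = (\<alpha> v * \<beta> w + \<alpha> w * \<beta> v) / 2"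

definition cnjf :: "('v \<Rightarrow> complex) \<Rightarrow> 'v \<Rightarrow> complex" where
  "cnjf \<alpha> = (\<lambda>v. cnj (\<alpha> v))"

definition absq :: "('v \<Rightarrow> complex) \<Rightarrow> 'v \<Rightarrow> 'v \<Rightarrow> complex" where
  "absq \<alpha> = sym_prod \<alpha> (cnjf \<alpha>)"

definition sqf :: "('v \<Rightarrow> complex) \<Rightarrow> 'v \<Rightarrow> 'v \<Rightarrow> complex" where
  "sqf \<alpha> = sym_prod \<alpha> \<alpha>"

definition dz1 :: "(complex \<times> complex) \<times> real \<Rightarrow> complex" where
  "dz1 v = fst (fst v)"
definition dz2 :: "(complex \<times> complex) \<times> real \<Rightarrow> complex" where
  "dz2 v = snd (fst v)"
definition dpsi :: "(complex \<times> complex) \<times> real \<Rightarrow> complex" where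
  "dpsi v = complex_of_real (snd v)"

definition dZ1 :: "complex \<times> complex \<times> complex \<times> complex \<Rightarrow> complex" where
  "dZ1 X = fst X"
definition dZ2 :: "complex \<times> complex \<times> complex \<times> complex \<Rightarrow> complex" where
  "dZ2 X = fst (snd X)"
definition dW1 :: "complex \<times> complex \<times> complex \<times> complex \<Rightarrow> complex" where
  "dW1 X = fst (snd (snd X))"
definition dW2 :: "complex \<times> complex \<times> complex \<times> complex \<Rightarrow> complex" where
  "dW2 X = snd (snd (snd X))"

definition flat_h :: "complex \<times> complex \<times> complex \<times> complex \<Rightarrow> complex \<times> complex \<times> complex \<times> complex \<Rightarrow> complex" where
  "flat_h X Y = (absq dZ1 X Y + absq dZ2 X Y + absq dW1 X Y + absq dW2 X Y) / 2"

definition sq :: "complex \<times> complex \<Rightarrow> real" where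
  "sq z = (cmod (fst z))^2 + (cmod (snd z))^2"

definition FF :: "real \<Rightarrow> complex \<times> complex \<Rightarrow> real" where
  "FF \<kappa> z = sqrt (1 + \<kappa> / (sq z)^2)"

definition ff :: "real \<Rightarrow> complex \<times> complex \<Rightarrow> real" where
  "ff \<kappa> z = sqrt (1 + \<kappa> / (sq z)^2) + sqrt \<kappa> / sq z"

definition eh_map :: "real \<Rightarrow> (complex \<times> complex) \<times> real \<Rightarrow> complex \<times> complex \<times> complex \<times> complex" where
  "eh_map \<kappa> p = (let z1 = fst (fst p); z2 = snd (fst p); \<psi> = snd p; f = ff \<kappa> (fst p) in
     (z1 * exp (\<i> * of_real \<psi>) * of_real (sqrt f),
      z2 * exp (\<i> * of_real \<psi>) * of_real (sqrt f),
      - z2 * exp (- \<i> * of_real \<psi>) * of_real (1 / sqrt f),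
      z1 * exp (- \<i> * of_real \<psi>) * of_real (1 / sqrt f)))"

definition muR :: "real \<Rightarrow> complex \<times> complex \<times> complex \<times> complex \<Rightarrow> real" where
  "muR \<kappa> X = (cmod (dZ1 X))^2 + (cmod (dZ2 X))^2 - (cmod (dW1 X))^2 - (cmod (dW2 X))^2 - 2 * sqrt \<kappa>"

definition muC :: "complex \<times> complex \<times> complex \<times> complex \<Rightarrow> complex" where
  "muC X = dZ1 X * dW1 X + dZ2 X * dW2 X"

definition eh_metric :: "real \<Rightarrow> complex \<times> complex \<Rightarrow> (complex \<times> complex) \<times> real \<Rightarrow> (complex \<times> complex) \<times> real \<Rightarrow> complex" where
  "eh_metric \<kappa> z v w = (let z1 = fst z; z2 = snd z; s = sq z; F = FF \<kappa> z in
     of_real (1 / s) *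
       (of_real F * absq (\<lambda>u. z1 * dz2 u - z2 * dz1 u) v w
        + of_real (1 / F) * absq (\<lambda>u. cnj z1 * dz1 u + cnj z2 * dz2 u) v w))"

definition A_form :: "real \<Rightarrow> complex \<times> complex \<Rightarrow> (complex \<times> complex) \<times> real \<Rightarrow> complex" where
  "A_form \<kappa> z u = (let z1 = fst z; z2 = snd z; s = sq z; F = FF \<kappa> z in
     of_real (sqrt \<kappa> / (2 * s^2 * F)) * (z1 * cnj (dz1 u) + z2 * cnj (dz2 u)))"

end

theory Submission
  imports Defs
begin

lemma sq_alt: "sq z = Re (fst z * cnj (fst z)) + Re (snd z * cnj (snd z))"
  by (simp add: sq_def complex_mult_cnj cmod_def)  
lemma sq_deriv: "((\<lambda>p::(complex\<times>complex)\<times>real. sq (fst p)) has_derivative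
   (\<lambda>v. 2 * Re (cnj (fst (fst p)) * fst (fst v) + cnj (snd (fst p)) * snd (fst v)))) (at p)"
  unfolding sq_alt
  apply (rule has_derivative_eq_rhs)
   apply (rule derivative_eq_intros | simp)+
  by (auto simp: algebra_simps)
definition ffr :: "real \<Rightarrow> real \<Rightarrow> real" where "ffr k x = sqrt (1 + k / x^2) + sqrt k / x"
definition hh :: "real \<Rightarrow> real \<Rightarrow> real" where "hh k x = sqrt (ffr k x)"
lemma ffr_pos: assumes "k > 0" "x > 0" shows "ffr k x > 0"
  using assms unfolding ffr_def by (simp add: add_pos_pos)
lemma ffr_deriv: assumes "k > 0" "x > 0" shows "(ffr k has_real_derivative (- ffr k x * sqrt k / (x^2 * sqrt (1 + k/x^2)))) (at x)"
proof -
  define F where "F = sqrt (1 + k/x^2)"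
  have F: "F > 0" "F^2 = 1 + k/x^2" using assms unfolding F_def by (auto simp: add_pos_nonneg)
  have sk: "sqrt k ^2 = k" using assms by simp
  have a: "((\<lambda>x. 1 + k/x^2) has_real_derivative (-2*k/x^3)) (at x)"
    using assms by (auto intro!: derivative_eq_intros simp: field_simps power2_eq_square power3_eq_cube)
  have pos: "1 + k/x^2 > 0" using assms by (simp add: add_pos_nonneg)
  have b: "((\<lambda>x. sqrt (1 + k/x^2)) has_real_derivative (inverse (sqrt (1 + k/x^2)) / 2 * (-2*k/x^3))) (at x)"
    by (rule DERIV_chain2[OF DERIV_real_sqrt[OF pos] a])
  have c: "((\<lambda>x. sqrt k / x) has_real_derivative (- sqrt k / x^2)) (at x)"
    using assms by (auto intro!: derivative_eq_intros simp: field_simps power2_eq_square)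
  have d: "(ffr k has_real_derivative (inverse (sqrt (1 + k/x^2)) / 2 * (-2*k/x^3) + - sqrt k / x^2)) (at x)"
    unfolding ffr_def[abs_def] by (rule DERIV_add[OF b c])
  show ?thesis
    apply (rule DERIV_cong[OF d])
    unfolding F_def[symmetric] ffr_def
    using assms F sk by (simp add: field_simps power2_eq_square power3_eq_cube)
qed
lemma hh_deriv: assumes "k > 0" "x > 0" shows "(hh k has_real_derivative (- hh k x * sqrt k / (2 * x^2 * sqrt (1 + k/x^2)))) (at x)"
proof -
  have e: "\<And>t f D E c::real. t > 0 \<Longrightarrow> f = t*t \<Longrightarrow> D \<noteq> 0 \<Longrightarrow> E \<noteq> 0 \<Longrightarrow> inverse t / 2 * (- f * c / (D*E)) = - t * c/(2*D*E)"
    by (simp add: field_simps)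
  have F0: "sqrt (1 + k/x^2) > 0" using assms by (simp add: add_pos_nonneg)
  show ?thesis 
  unfolding hh_def
  apply (rule DERIV_cong)
   apply (rule DERIV_chain2[OF DERIV_real_sqrt[OF ffr_pos[OF assms]] ffr_deriv[OF assms]])
  apply (intro e)
  using ffr_pos[OF assms] assms F0 by auto
qed

lemma expi_deriv: "((\<lambda>p::(complex\<times>complex)\<times>real. exp (\<i> * of_real (snd p))) has_derivative
   (\<lambda>v. exp (\<i> * of_real (snd p)) * (\<i> * of_real (snd v)))) (at p)"
proof -
  have i: "((\<lambda>p::(complex\<times>complex)\<times>real. \<i> * of_real (snd p)) has_derivative (\<lambda>v. \<i> * of_real (snd v))) (at p)"
    by (auto intro!: derivative_eq_intros)
  show ?thesis
    using has_derivative_compose[OF i DERIV_exp[unfolded has_field_derivative_def]] by simp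
qed

lemma expmi_deriv: "((\<lambda>p::(complex\<times>complex)\<times>real. exp (- \<i> * of_real (snd p))) has_derivative
   (\<lambda>v. exp (- \<i> * of_real (snd p)) * (- \<i> * of_real (snd v)))) (at p)"
proof -
  have i: "((\<lambda>p::(complex\<times>complex)\<times>real. - \<i> * of_real (snd p)) has_derivative (\<lambda>v. - \<i> * of_real (snd v))) (at p)"
    by (auto intro!: derivative_eq_intros)
  show ?thesis
    using has_derivative_compose[OF i DERIV_exp[unfolded has_field_derivative_def]] by simp
qed

lemma ff_hh: "sqrt (ff k z) = hh k (sq z)"
  by (simp add: ff_def hh_def ffr_def)

lemma hsq_deriv: assumes "k > 0" "sq (fst p) > 0"
  shows "((\<lambda>p::(complex\<times>complex)\<times>real. hh k (sq (fst p))) has_derivative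
   (\<lambda>v. 2 * Re (cnj (fst (fst p)) * fst (fst v) + cnj (snd (fst p)) * snd (fst v)) *
      (- hh k (sq (fst p)) * sqrt k / (2 * (sq (fst p))^2 * sqrt (1 + k/(sq (fst p))^2))))) (at p)"
  by (rule DERIV_compose_FDERIV[OF hh_deriv[OF assms] sq_deriv])

lemma hinv_deriv: assumes "k > 0" "sq (fst p) > 0"
  shows "((\<lambda>p::(complex\<times>complex)\<times>real. 1 / hh k (sq (fst p))) has_derivative
   (\<lambda>v. 2 * Re (cnj (fst (fst p)) * fst (fst v) + cnj (snd (fst p)) * snd (fst v)) *
      (sqrt k / (2 * (sq (fst p))^2 * sqrt (1 + k/(sq (fst p))^2)) / hh k (sq (fst p))))) (at p)"
proof -
  have hp: "hh k (sq (fst p)) > 0" unfolding hh_def using ffr_pos[OF assms] by simp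
  have e: "\<And>r h c::real. h > 0 \<Longrightarrow> - 1 * (inverse h * (r * (- h * c)) * inverse h) + 0 / h = r * (c / h)"
    by (simp add: field_simps)
  show ?thesis
  apply (rule has_derivative_eq_rhs)
   apply (rule derivative_eq_intros hsq_deriv[OF assms] refl)+
  using hp apply simp
   apply (rule refl)
  apply (rule ext)
  apply (subst times_divide_eq_right[symmetric])
  apply (rule e)
  using hp by simp
qed

definition Dm :: "real \<Rightarrow> (complex \<times> complex) \<times> real \<Rightarrow> (complex \<times> complex) \<times> real \<Rightarrow> complex \<times> complex \<times> complex \<times> complex" where
  "Dm k p v = (let z1 = fst (fst p); z2 = snd (fst p); E = exp (\<i> * of_real (snd p));
     Ei = exp (- \<i> * of_real (snd p)); s = sq (fst p); h = hh k s;
     c = sqrt k / (2 * s^2 * sqrt (1 + k/s^2));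
     r = 2 * Re (cnj z1 * fst (fst v) + cnj z2 * snd (fst v));
     \<phi> = - of_real (c * r) + \<i> * of_real (snd v) in
     (E * of_real h * (fst (fst v) + \<phi> * z1),
      E * of_real h * (snd (fst v) + \<phi> * z2),
      Ei * of_real (1/h) * (- (snd (fst v) - \<phi> * z2)),
      Ei * of_real (1/h) * (fst (fst v) - \<phi> * z1)))"

lemma map_deriv: assumes "k > 0" "sq (fst p) > 0"
  shows "(eh_map k has_derivative Dm k p) (at p)"
proof -
  have e: "eh_map k = (\<lambda>p. (fst (fst p) * exp (\<i> * of_real (snd p)) * of_real (hh k (sq (fst p))),
      snd (fst p) * exp (\<i> * of_real (snd p)) * of_real (hh k (sq (fst p))),
      - snd (fst p) * exp (- \<i> * of_real (snd p)) * of_real (1 / hh k (sq (fst p))),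
      fst (fst p) * exp (- \<i> * of_real (snd p)) * of_real (1 / hh k (sq (fst p)))))"
    by (auto simp: eh_map_def ff_hh Let_def)
  define c where "c = sqrt k / (2 * (sq (fst p))^2 * sqrt (1 + k/(sq (fst p))^2))"
  define h where "h = hh k (sq (fst p))"
  define r where "r = (\<lambda>v::(complex\<times>complex)\<times>real. 2 * Re (cnj (fst (fst p)) * fst (fst v) + cnj (snd (fst p)) * snd (fst v)))"
  have hp: "h > 0" unfolding h_def hh_def using ffr_pos[OF assms] by simp
  have d1: "((\<lambda>p::(complex\<times>complex)\<times>real. hh k (sq (fst p))) has_derivative (\<lambda>v. - h * c * r v)) (at p)"
    using hsq_deriv[OF assms] unfolding c_def h_def r_def by (simp add: mult_ac)
  have d2: "((\<lambda>p::(complex\<times>complex)\<times>real. 1 / hh k (sq (fst p))) has_derivative (\<lambda>v. c * r v / h)) (at p)"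
    using hinv_deriv[OF assms] unfolding c_def h_def r_def by (simp add: mult_ac)
  have D: "Dm k p = (\<lambda>v. let z1 = fst (fst p); z2 = snd (fst p); E = exp (\<i> * of_real (snd p));
     Ei = exp (- \<i> * of_real (snd p));
     \<phi> = - of_real (c * r v) + \<i> * of_real (snd v) in
     (E * of_real h * (fst (fst v) + \<phi> * z1),
      E * of_real h * (snd (fst v) + \<phi> * z2),
      Ei * of_real (1/h) * (- (snd (fst v) - \<phi> * z2)),
      Ei * of_real (1/h) * (fst (fst v) - \<phi> * z1)))"
    unfolding Dm_def c_def h_def r_def by (simp add: Let_def)
  show ?thesis unfolding e D
  apply (rule has_derivative_eq_rhs)
   apply (rule d1 d2 expi_deriv expmi_deriv derivative_eq_intros refl)+
  apply (rule ext)
  using hp apply (simp add: Let_def field_simps h_def[symmetric])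
  done
qed

definition sp :: "complex \<Rightarrow> complex \<Rightarrow> complex" where "sp a b = (a * cnj b + b * cnj a) / 2"

lemma lagrange: "sp (z1 * v2 - z2 * v1) (z1 * w2 - z2 * w1) + sp (cnj z1 * v1 + cnj z2 * v2) (cnj z1 * w1 + cnj z2 * w2)
  = (z1 * cnj z1 + z2 * cnj z2) * (sp v1 w1 + sp v2 w2)"
  by (simp add: sp_def field_simps)

lemma xsum: "sp (v1 + p * z1) (w1 + p' * z1) + sp (v2 + p * z2) (w2 + p' * z2)
  = (sp v1 w1 + sp v2 w2) + sp (cnj z1 * v1 + cnj z2 * v2) p' + sp p (cnj z1 * w1 + cnj z2 * w2)
    + (z1 * cnj z1 + z2 * cnj z2) * sp p p'"
  by (simp add: sp_def field_simps)

lemma small: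
  fixes uv uw :: complex and t t' c F s :: real
  defines "q \<equiv> 2 * c * s * F"
  defines "pv \<equiv> - of_real (c * (2 * Re uv)) + \<i> * of_real t" and "pw \<equiv> - of_real (c * (2 * Re uw)) + \<i> * of_real t'"
  defines "Av \<equiv> of_real c * cnj uv" and "Aw \<equiv> of_real c * cnj uw"
  shows "of_real (F * s) * sp pv pw + of_real q * (sp uv pw + sp pv uw)
   = - of_real (2 * q * c) * sp uv uw
     + of_real (s * F) * ((of_real t + \<i> * (Av - cnj Av)) * (of_real t' + \<i> * (Aw - cnj Aw)))"
  unfolding q_def pv_def pw_def Av_def Aw_def
  by (simp add: sp_def complex_eq_iff field_simps)

lemma spE: "E * cnj E = 1 \<Longrightarrow> sp (E * of_real h * a) (E * of_real h * b) = of_real (h^2) * sp a b"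
proof -
  assume a: "E * cnj E = 1"
  have "sp (E * of_real h * a) (E * of_real h * b) = (E * cnj E) * of_real (h^2) * sp a b"
    by (simp add: sp_def algebra_simps power2_eq_square)
  then show ?thesis using a by simp
qed

lemma sp_neg: "sp (- a) (- b) = sp a b"
  unfolding sp_def by simp

lemma sp_negr: "sp a (- b) = - sp a b" and sp_negl: "sp (- a) b = - sp a b"
  unfolding sp_def by (simp_all add: algebra_simps)

lemma flat_sp: "flat_h X Y = (sp (fst X) (fst Y) + sp (fst (snd X)) (fst (snd Y))
   + sp (fst (snd (snd X))) (fst (snd (snd Y))) + sp (snd (snd (snd X))) (snd (snd (snd Y)))) / 2"
  by (simp add: flat_h_def absq_def sym_prod_def cnjf_def sp_def dZ1_def dZ2_def dW1_def dW2_def)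

lemma absq_sp: "absq \<alpha> v w = sp (\<alpha> v) (\<alpha> w)"
  by (simp add: absq_def sym_prod_def cnjf_def sp_def)

lemma sqf_eq: "sqf \<alpha> v w = \<alpha> v * \<alpha> w"
  by (simp add: sqf_def sym_prod_def)

theorem mainTheorem4:
  fixes \<kappa> :: real and z1 z2 :: complex and \<psi> :: real
  assumes "\<kappa> > 0" and "(z1, z2) \<noteq> (0, 0)"
  shows "muR \<kappa> (eh_map \<kappa> ((z1, z2), \<psi>)) = 0
    \<and> muC (eh_map \<kappa> ((z1, z2), \<psi>)) = 0
    \<and> (\<exists>D. (eh_map \<kappa> has_derivative D) (at ((z1, z2), \<psi>))
         \<and> (\<forall>v w. flat_h (D v) (D w) =
              eh_metric \<kappa> (z1, z2) v w
              + of_real (sq (z1, z2) * FF \<kappa> (z1, z2)) *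
                sqf (\<lambda>u. dpsi u + \<i> * (A_form \<kappa> (z1, z2) u - cnj (A_form \<kappa> (z1, z2) u))) v w))"
proof -
  define k where "k = \<kappa>"
  define p where "p = ((z1, z2), \<psi>)"
  define s where "s = sq (z1, z2)"
  have k0: "k > 0" using assms k_def by simp
  have s0: "s > 0" using assms(2) unfolding s_def sq_def
    by (auto simp: add_pos_nonneg add_nonneg_pos)
  define F where "F = sqrt (1 + k / s^2)"
  have F0: "F > 0" unfolding F_def using k0 s0 by (simp add: add_pos_nonneg)
  have FF: "F^2 = 1 + k / s^2" unfolding F_def using k0 s0 by (simp add: add_pos_nonneg)
  define c where "c = sqrt k / (2 * s^2 * F)"
  define q where "q = 2 * c * s * F"
  have q: "q = sqrt k / s" unfolding q_def c_def using s0 F0 by (simp add: field_simps power2_eq_square)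
  have qq: "q^2 = k / s^2" unfolding q using k0 by (simp add: power_divide)
  define h where "h = hh k s"
  have fpos: "ffr k s > 0" by (rule ffr_pos[OF k0 s0])
  have h0: "h > 0" unfolding h_def hh_def using fpos by simp
  have hh2: "h^2 = F + q" unfolding h_def hh_def using fpos by (simp add: ffr_def F_def q)
  have hi2: "(1/h)^2 = F - q"
  proof -
    have "(F + q) * (F - q) = 1" using FF qq by (simp add: algebra_simps power2_eq_square)
    moreover have "F + q > 0" using F0 k0 s0 unfolding q by (simp add: add_pos_nonneg)
    ultimately show ?thesis using hh2 by (simp add: power_one_over field_simps)
  qed
  define E where "E = exp (\<i> * of_real \<psi>)"
  define Ei where "Ei = exp (- \<i> * of_real \<psi>)"
  have EE: "E * cnj E = 1" "Ei * cnj Ei = 1" unfolding E_def Ei_def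
    by (simp_all add: exp_cnj flip: exp_add)
  have nE: "cmod E = 1" "cmod Ei = 1" unfolding E_def Ei_def
    using norm_exp_i_times[of \<psi>] norm_exp_i_times[of "- \<psi>"] by simp_all
  have emap: "eh_map k p = (z1 * E * of_real h, z2 * E * of_real h, - z2 * Ei * of_real (1/h), z1 * Ei * of_real (1/h))"
    by (simp add: eh_map_def p_def E_def Ei_def h_def s_def ff_hh Let_def)
  have part1: "muR k (eh_map k p) = 0"
  proof -
    have "muR k (eh_map k p) = s * h^2 - s * (1/h)^2 - 2 * sqrt k"
      unfolding emap muR_def dZ1_def dZ2_def dW1_def dW2_def s_def sq_def
      using nE h0 by (simp add: norm_mult norm_divide power_mult_distrib power_divide algebra_simps)
    also have "\<dots> = 0" unfolding hh2 hi2 q using s0 by (simp add: field_simps)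
    finally show ?thesis .
  qed
  have part2: "muC (eh_map k p) = 0"
    unfolding emap muC_def dZ1_def dZ2_def dW1_def dW2_def by (simp add: algebra_simps)
  have Dd: "(eh_map k has_derivative Dm k p) (at p)"
    by (rule map_deriv[OF k0]) (use s0 s_def p_def in simp)
  have part3: "flat_h (Dm k p v) (Dm k p w) =
              eh_metric k (z1, z2) v w
              + of_real (sq (z1, z2) * FF k (z1, z2)) *
                sqf (\<lambda>u. dpsi u + \<i> * (A_form k (z1, z2) u - cnj (A_form k (z1, z2) u))) v w" for v w
  proof -
    obtain v1 v2 t where v: "v = ((v1, v2), t)" by (metis prod.collapse)
    obtain w1 w2 t' where w: "w = ((w1, w2), t')" by (metis prod.collapse)
    define uv where "uv = cnj z1 * v1 + cnj z2 * v2"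
    define uw where "uw = cnj z1 * w1 + cnj z2 * w2"
    define pv where "pv = - of_real (c * (2 * Re uv)) + \<i> * of_real t"
    define pw where "pw = - of_real (c * (2 * Re uw)) + \<i> * of_real t'"
    have Dv: "Dm k p v = (E * of_real h * (v1 + pv * z1), E * of_real h * (v2 + pv * z2),
        Ei * of_real (1/h) * (- (v2 - pv * z2)), Ei * of_real (1/h) * (v1 - pv * z1))"
      by (simp add: Dm_def Let_def p_def v E_def Ei_def h_def s_def[symmetric] c_def F_def pv_def uv_def)
    have Dw: "Dm k p w = (E * of_real h * (w1 + pw * z1), E * of_real h * (w2 + pw * z2),
        Ei * of_real (1/h) * (- (w2 - pw * z2)), Ei * of_real (1/h) * (w1 - pw * z1))"
      by (simp add: Dm_def Let_def p_def w E_def Ei_def h_def s_def[symmetric] c_def F_def pw_def uw_def)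
    define V where "V = sp v1 w1 + sp v2 w2"
    have S: "z1 * cnj z1 + z2 * cnj z2 = of_real s"
      unfolding s_def sq_def by (simp only: of_real_add complex_norm_square fst_conv snd_conv)
    have X: "sp (v1 + pv * z1) (w1 + pw * z1) + sp (v2 + pv * z2) (w2 + pw * z2)
       = V + sp uv pw + sp pv uw + of_real s * sp pv pw"
      unfolding xsum V_def uv_def uw_def S ..
    have U: "sp (v1 - pv * z1) (w1 - pw * z1) + sp (v2 - pv * z2) (w2 - pw * z2)
       = V - sp uv pw - sp pv uw + of_real s * sp pv pw"
      using xsum[of v1 "- pv" z1 w1 "- pw" v2 z2 w2] unfolding V_def uv_def uw_def S
      by (simp add: sp_neg sp_negr sp_negl)
    have LHS: "flat_h (Dm k p v) (Dm k p w) = (of_real (F + q) * (V + sp uv pw + sp pv uw + of_real s * sp pv pw)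
        + of_real (F - q) * (V - sp uv pw - sp pv uw + of_real s * sp pv pw)) / 2"
      unfolding X[symmetric] U[symmetric]
      apply (simp only: flat_sp Dv Dw fst_conv snd_conv spE[OF EE(1)] spE[OF EE(2)] sp_neg hh2 hi2)
      by (simp add: algebra_simps)
    also have "\<dots> = of_real F * V + of_real (F * s) * sp pv pw + of_real q * (sp uv pw + sp pv uw)"
      by (simp add: algebra_simps)
    finally have L: "flat_h (Dm k p v) (Dm k p w) = of_real F * V + of_real (F * s) * sp pv pw + of_real q * (sp uv pw + sp pv uw)" .
    have G: "eh_metric k (z1, z2) v w = of_real F * V - of_real (2 * q * c) * sp uv uw"
    proof -
      have lag: "sp (z1 * v2 - z2 * v1) (z1 * w2 - z2 * w1) = of_real s * V - sp uv uw"
        using lagrange[of z1 v2 z2 v1 w2 w1] unfolding S V_def uv_def uw_def by (simp add: algebra_simps)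
      have "eh_metric k (z1, z2) v w = of_real (1/s) * (of_real F * (of_real s * V - sp uv uw) + of_real (1/F) * sp uv uw)"
        unfolding eh_metric_def Let_def absq_sp lag[symmetric]
        by (simp add: v w dz1_def dz2_def s_def F_def FF_def uv_def uw_def)
      also have "\<dots> = of_real F * V + of_real ((1/F - F)/s) * sp uv uw"
        using s0 F0 by (simp add: field_simps)
      also have "(1/F - F)/s = - (2 * q * c)"
      proof -
        have "1/F - F = - (q^2) / F" using FF qq F0 by (simp add: field_simps power2_eq_square)
        then show ?thesis using s0 F0 unfolding q_def by (simp add: field_simps power2_eq_square)
      qed
      finally show ?thesis by simp
    qed
    have Af: "A_form k (z1, z2) u = of_real c * cnj (cnj z1 * fst (fst u) + cnj z2 * snd (fst u))" for u
      by (simp add: A_form_def Let_def c_def s_def[symmetric] F_def FF_def dz1_def dz2_def mult_ac)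
    have R: "of_real (sq (z1, z2) * FF k (z1, z2)) *
                sqf (\<lambda>u. dpsi u + \<i> * (A_form k (z1, z2) u - cnj (A_form k (z1, z2) u))) v w
          = of_real (s * F) * ((of_real t + \<i> * (of_real c * cnj uv - cnj (of_real c * cnj uv))) *
               (of_real t' + \<i> * (of_real c * cnj uw - cnj (of_real c * cnj uw))))"
      unfolding sqf_eq Af by (simp add: v w dpsi_def uv_def uw_def s_def[symmetric] F_def FF_def)
    note sm = small[where uv=uv and uw=uw and t=t and t'=t' and c=c and F=F and s=s, folded q_def pv_def pw_def]
    have "flat_h (Dm k p v) (Dm k p w) = of_real F * V + (of_real (F * s) * sp pv pw + of_real q * (sp uv pw + sp pv uw))"
      unfolding L by (simp only: add.assoc)
    also have "\<dots> = of_real F * V + (- of_real (2 * q * c) * sp uv uw + of_real (s * F) * ((of_real t + \<i> * (of_real c * cnj uv - cnj (of_real c * cnj uv))) *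
               (of_real t' + \<i> * (of_real c * cnj uw - cnj (of_real c * cnj uw)))))"
      unfolding sm ..
    also have "\<dots> = eh_metric k (z1, z2) v w
              + of_real (sq (z1, z2) * FF k (z1, z2)) *
                sqf (\<lambda>u. dpsi u + \<i> * (A_form k (z1, z2) u - cnj (A_form k (z1, z2) u))) v w"
      unfolding G R by (simp add: algebra_simps)
    finally show ?thesis .
  qed
  show ?thesis
    using part1 part2 Dd part3 unfolding k_def p_def by blast
qed

end
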